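(* Let $M\ge 2$ modalities be given, with latent representations $z^{(1)},\ldots,z^{(M)}\in\mathbb{R}^d$ (Euclidean norm $\|\cdot\|_2$; $\mathrm{dist}(x,\mathcal{S})=\inf_{s\in\mathcal{S}}\|x-s\|_2$, $\mathcal{B}(\mathcal{S},r)=\{x:\mathrm{dist}(x,\mathcal{S})\le r\}$). Let $\epsilon>0$, $\delta>2\epsilon$, and for each modality $m$ and class $c\in\{1,\ldots,K\}$ let $\mathcal{M}_c^{(m)}\subset\mathbb{R}^d$ be nonempty sets with $\inf_{u\in\mathcal{M}_i^{(m)},v\in\mathcal{M}_j^{(m)}}\|u-v\|_2\ge\delta$ for all $m$ and $i\neq j$. Fix a modality $B$ and classes $y\neq k$ with $z^{(B)}\in\mathcal{B}(\mathcal{M}_k^{(B)},\epsilon)$. Suppose that for every modality $n\neq B$ one has $z^{(n)}\in\mathcal{B}(\mathcal{M}_y^{(n)},\epsilon)$ and the map $\Phi_{n\to B}:\mathbb{R}^d\to\mathbb{R}^d$ is $\xi$-semantically consistent with $\xi\le\epsilon$, i.e. $\mathrm{dist}(\Phi_{n\to B}(u),\mathcal{M}_y^{(B)})\le\xi$ for all $u\in\mathcal{B}(\mathcal{M}_y^{(n)},\epsilon)$. Let $\lambda\ge0$, $\kappa>0$, $\theta_r\in\mathbb{R}$, $\epsilon_\gamma>0$, let $\mathcal{E}_{\mathrm{intra}}^{(n)}\in\mathbb{R}$ be arbitrary, let $\sigma$ be the logistic sigmoid, and define $$\mathcal{E}_{\mathrm{inter}}^{(n\to B)}=\|\Phi_{n\to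 B}(z^{(n)})-z^{(B)}\|_2^2,\qquad \gamma_{\mathrm{int}}^{(B)}=\lambda\sum_{n\neq B}\sigma\big(\theta_r-\mathcal{E}_{\mathrm{intra}}^{(n)}\big)\exp\!\Big(-\frac{\mathcal{E}_{\mathrm{inter}}^{(n\to B)}}{\kappa}\Big),\qquad \tilde{\gamma}_{\mathrm{int}}^{(B)}=\gamma_{\mathrm{int}}^{(B)}+\epsilon_\gamma.$$ Then, with $D=(\delta-2\epsilon)^2$, $$\gamma_{\mathrm{int}}^{(B)}\le\lambda(M-1)\exp\!\Big(-\frac{D}{\kappa}\Big),\qquad\text{and consequently}\qquad \tilde{\gamma}_{\mathrm{int}}^{(B)}\le\lambda(M-1)\exp\!\Big(-\frac{D}{\kappa}\Big)+\epsilon_\gamma.$$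
   Context: This is the multimodal fusion setting: $\gamma_{\mathrm{int}}^{(B)}$ is the interaction gate of modality $B$, aggregating cross-modal consensus from the other modalities $n$, weighted by reliability scores $r^{(n)}=\sigma(\theta_r-\mathcal{E}_{\mathrm{intra}}^{(n)})\in[0,1]$ where $\mathcal{E}_{\mathrm{intra}}^{(n)}$ is an intra-modal transport cost; $\epsilon_\gamma$ is a small numerical floor. The hypothesis says modality $B$ encodes a class $k$ that conflicts with the class $y$ encoded by every other (reliable, semantically consistent) modality. *)

theory Defs
  imports "HOL-Analysis.Analysis"
begin

definition sigmoid :: "real \<Rightarrow> real" where
  "sigmoid t = 1 / (1 + exp (- t))"

definition setdistpt :: "'a::euclidean_space \<Rightarrow> 'a set \<Rightarrow> real" where
  "setdistpt x S = Inf {norm (x - s) | s. s \<in> S}"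

definition nbhd :: "'a::euclidean_space set \<Rightarrow> real \<Rightarrow> 'a set" where
  "nbhd S r = {x. setdistpt x S \<le> r}"

definition E_inter :: "('a::euclidean_space \<Rightarrow> 'a) \<Rightarrow> 'a \<Rightarrow> 'a \<Rightarrow> real" where
  "E_inter Phi zn zB = (norm (Phi zn - zB))\<^sup>2"

definition gamma_int ::
  "nat \<Rightarrow> nat \<Rightarrow> real \<Rightarrow> real \<Rightarrow> real \<Rightarrow> (nat \<Rightarrow> real) \<Rightarrow> (nat \<Rightarrow> 'a::euclidean_space \<Rightarrow> 'a)
    \<Rightarrow> (nat \<Rightarrow> 'a) \<Rightarrow> real" where
  "gamma_int M B lam kappa theta_r E_intra Phi z =
     lam * (\<Sum>n\<in>{1..M} - {B}. sigmoid (theta_r - E_intra n) * exp (- E_inter (Phi n) (z n) (z B) / kappa))"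

end

theory Submission
  imports Defs
begin

theorem corollary4p5:
  fixes M K B y k :: nat
    and z :: "nat \<Rightarrow> 'd::euclidean_space"
    and Mf :: "nat \<Rightarrow> nat \<Rightarrow> 'd set"
    and Phi :: "nat \<Rightarrow> 'd \<Rightarrow> 'd"
    and eps delta xi lam kappa theta_r eps_gamma :: real
    and E_intra :: "nat \<Rightarrow> real"
  assumes "M \<ge> 2"
    and "eps > 0" and "delta > 2 * eps"
    and nonempty: "\<forall>m\<in>{1..M}. \<forall>c\<in>{1..K}. Mf m c \<noteq> {}"
    and sep: "\<forall>m\<in>{1..M}. \<forall>i\<in>{1..K}. \<forall>j\<in>{1..K}. i \<noteq> j \<longrightarrow>
               Inf {norm (u - v) | u v. u \<in> Mf m i \<and> v \<in> Mf m j} \<ge> delta"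
    and "B \<in> {1..M}" and "y \<in> {1..K}" and "k \<in> {1..K}" and "y \<noteq> k"
    and "z B \<in> nbhd (Mf B k) eps"
    and "\<forall>n\<in>{1..M} - {B}. z n \<in> nbhd (Mf n y) eps"
    and "xi \<le> eps"
    and "\<forall>n\<in>{1..M} - {B}. \<forall>u\<in>nbhd (Mf n y) eps. setdistpt (Phi n u) (Mf B y) \<le> xi"
    and "lam \<ge> 0" and "kappa > 0" and "eps_gamma > 0"
  shows "gamma_int M B lam kappa theta_r E_intra Phi z
           \<le> lam * (real M - 1) * exp (- ((delta - 2 * eps)\<^sup>2) / kappa)
       \<and> gamma_int M B lam kappa theta_r E_intra Phi z + eps_gamma
           \<le> lam * (real M - 1) * exp (- ((delta - 2 * eps)\<^sup>2) / kappa) + eps_gamma"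
proof -
  let ?D = "(delta - 2 * eps)\<^sup>2"
  have key: "norm (Phi n (z n) - z B) \<ge> delta - 2 * eps" if n: "n \<in> {1..M} - {B}" for n
  proof (rule ccontr)
    assume "\<not> ?thesis"
    hence lt: "norm (Phi n (z n) - z B) < delta - 2 * eps" by simp
    define eta where "eta = (delta - 2 * eps - norm (Phi n (z n) - z B)) / 3"
    have eta: "eta > 0" using lt by (simp add: eta_def)
    have ne1: "Mf B y \<noteq> {}" using nonempty assms(6,7) by auto
    have ne2: "Mf B k \<noteq> {}" using nonempty assms(6,8) by auto
    have d1: "setdistpt (Phi n (z n)) (Mf B y) \<le> eps"
    proof -
      have "z n \<in> nbhd (Mf n y) eps" using assms(11) n by blast
      hence "setdistpt (Phi n (z n)) (Mf B y) \<le> xi" using assms(13) n by blast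
      thus ?thesis using assms(12) by linarith
    qed
    have d2: "setdistpt (z B) (Mf B k) \<le> eps" using assms(10) by (simp add: nbhd_def)
    obtain u where u: "u \<in> Mf B y" "norm (Phi n (z n) - u) < eps + eta"
    proof -
      have lt1: "Inf {norm (Phi n (z n) - s) | s. s \<in> Mf B y} < eps + eta"
        using d1 eta by (simp add: setdistpt_def)
      have ne: "{norm (Phi n (z n) - s) | s. s \<in> Mf B y} \<noteq> {}" using ne1 by auto
      obtain x where "x \<in> {norm (Phi n (z n) - s) | s. s \<in> Mf B y}" "x < eps + eta"
        using cInf_lessD[OF ne lt1] by blast
      thus ?thesis using that by blast
    qed
    obtain v where v: "v \<in> Mf B k" "norm (z B - v) < eps + eta"
    proof -
      have lt1: "Inf {norm (z B - s) | s. s \<in> Mf B k} < eps + eta"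
        using d2 eta by (simp add: setdistpt_def)
      have ne: "{norm (z B - s) | s. s \<in> Mf B k} \<noteq> {}" using ne2 by auto
      obtain x where "x \<in> {norm (z B - s) | s. s \<in> Mf B k}" "x < eps + eta"
        using cInf_lessD[OF ne lt1] by blast
      thus ?thesis using that by blast
    qed
    have "norm (u - v) \<le> norm (u - Phi n (z n)) + norm (Phi n (z n) - z B) + norm (z B - v)"
    proof -
      have "u - v = (u - Phi n (z n)) + (Phi n (z n) - z B) + (z B - v)" by simp
      hence "norm (u - v) = norm ((u - Phi n (z n)) + (Phi n (z n) - z B) + (z B - v))" by simp
      also have "\<dots> \<le> norm ((u - Phi n (z n)) + (Phi n (z n) - z B)) + norm (z B - v)" by (rule norm_triangle_ineq)
      also have "\<dots> \<le> norm (u - Phi n (z n)) + norm (Phi n (z n) - z B) + norm (z B - v)"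
        using norm_triangle_ineq[of "u - Phi n (z n)" "Phi n (z n) - z B"] by linarith
      finally show ?thesis .
    qed
    also have "\<dots> < delta" proof -
      have e3: "3 * eta = delta - 2 * eps - norm (Phi n (z n) - z B)" unfolding eta_def by simp
      have "norm (u - Phi n (z n)) = norm (Phi n (z n) - u)" by (rule norm_minus_commute)
      thus ?thesis using u(2) v(2) lt e3 by linarith
    qed
    finally have lt2: "norm (u - v) < delta" .
    have "Inf {norm (u - v) | u v. u \<in> Mf B y \<and> v \<in> Mf B k} \<le> norm (u - v)"
    proof (rule cInf_lower)
      show "norm (u - v) \<in> {norm (u - v) | u v. u \<in> Mf B y \<and> v \<in> Mf B k}" using u(1) v(1) by blast
      show "bdd_below {norm (u - v) | u v. u \<in> Mf B y \<and> v \<in> Mf B k}"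
        by (rule bdd_belowI[where m=0]) auto
    qed
    moreover have "Inf {norm (u - v) | u v. u \<in> Mf B y \<and> v \<in> Mf B k} \<ge> delta"
      using sep assms(6,7,8,9) by blast
    ultimately show False using lt2 by simp
  qed
  have tm: "sigmoid (theta_r - E_intra n) * exp (- E_inter (Phi n) (z n) (z B) / kappa)
      \<le> exp (- ?D / kappa)" if n: "n \<in> {1..M} - {B}" for n
  proof -
    have s0: "sigmoid (theta_r - E_intra n) > 0" "sigmoid (theta_r - E_intra n) \<le> 1"
      by (auto simp: sigmoid_def add_pos_pos)
    have "?D \<le> E_inter (Phi n) (z n) (z B)"
      unfolding E_inter_def using key[OF n] assms(2,3) by (intro power_mono) auto
    hence "exp (- E_inter (Phi n) (z n) (z B) / kappa) \<le> exp (- ?D / kappa)"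
      using assms(15) by (simp add: divide_right_mono)
    thus ?thesis using s0
      using mult_mono[of "sigmoid (theta_r - E_intra n)" 1 "exp (- E_inter (Phi n) (z n) (z B) / kappa)" "exp (- ?D / kappa)"]
      by simp
  qed
  have "(\<Sum>n\<in>{1..M} - {B}. sigmoid (theta_r - E_intra n) * exp (- E_inter (Phi n) (z n) (z B) / kappa))
      \<le> (\<Sum>n\<in>{1..M} - {B}. exp (- ?D / kappa))" by (rule sum_mono) (rule tm)
  also have "\<dots> = (real M - 1) * exp (- ?D / kappa)"
    using assms(1,6) by (simp add: card_Diff_singleton of_nat_diff)
  finally have "gamma_int M B lam kappa theta_r E_intra Phi z \<le> lam * ((real M - 1) * exp (- ?D / kappa))"
    unfolding gamma_int_def using assms(14) by (intro mult_left_mono) auto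
  thus ?thesis by (simp add: mult.assoc)
qed

end
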